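(* Let $\pi_+\in(0,1)$, $\pi_-=1-\pi_+$, let $p_+,p_-$ be densities on $\mathcal{X}$ and $\widetilde{p}_+=\frac{\pi_+p_++\pi_-^2p_-}{\pi_-^2+\pi_+}$, $\widetilde{p}_-=\frac{\pi_+^2p_++\pi_-p_-}{\pi_+^2+\pi_-}$. Let $\ell:\mathbb{R}\times\{+1,-1\}\to\mathbb{R}_+$ be a loss, $\mathcal{F}$ a class of functions $\mathcal{X}\to\mathbb{R}$, and let $\boldsymbol{x}_1,\dots,\boldsymbol{x}_n,\boldsymbol{x}_1',\dots,\boldsymbol{x}_n'\in\mathcal{X}$ be given points. Define $R(f)=\pi_+\mathbb{E}_{p_+}[\ell(f(\boldsymbol{x}),+1)]+\pi_-\mathbb{E}_{p_-}[\ell(f(\boldsymbol{x}),-1)]$, $$R^+_{\mathrm{PC}}(f)=\mathbb{E}_{\widetilde{p}_+(\boldsymbol{x})}[\ell(f(\boldsymbol{x}),+1)-\pi_+\ell(f(\boldsymbol{x}),-1)],\quad \widehat{R}^+_{\mathrm{PC}}(f)=\frac1n\sum_{i=1}^n\big(\ell(f(\boldsymbol{x}_i),+1)-\pi_+\ell(f(\boldsymbol{x}_i),-1)\big),$$ $$R^-_{\mathrm{PC}}(f)=\mathbb{E}_{\widetilde{p}_-(\boldsymbol{x}')}[\ell(f(\boldsymbol{x}'),-1)-\pi_-\ell(f(\boldsymbol{x}'),+1)],\quad \widehat{R}^-_{\mathrm{PC}}(f)=\frac1n\sum_{i=1}^n\big(\ell(f(\boldsymbol{x}_i'),-1)-\pi_-\ell(f(\boldsymbol{x}_i'),+1)\big),$$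 $\widehat{R}_{\mathrm{PC}}=\widehat{R}^+_{\mathrm{PC}}+\widehat{R}^-_{\mathrm{PC}}$, $\widehat{f}_{\mathrm{PC}}\in\arg\min_{f\in\mathcal{F}}\widehat{R}_{\mathrm{PC}}(f)$ and $f^\star\in\arg\min_{f\in\mathcal{F}}R(f)$. Then $$R(\widehat{f}_{\mathrm{PC}})-R(f^\star)\le2\sup_{f\in\mathcal{F}}\big|R^+_{\mathrm{PC}}(f)-\widehat{R}^+_{\mathrm{PC}}(f)\big|+2\sup_{f\in\mathcal{F}}\big|R^-_{\mathrm{PC}}(f)-\widehat{R}^-_{\mathrm{PC}}(f)\big|.$$
   Context: $\pi_\pm$ are class priors and $p_\pm$ class-conditional densities of a binary classification problem; $\widetilde{p}_\pm$ are the marginals of the first/second components of pairwise comparison data, and in the intended application $\boldsymbol{x}_i\sim\widetilde{p}_+$, $\boldsymbol{x}_i'\sim\widetilde{p}_-$. *)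

theory Defs
  imports "HOL-Analysis.Analysis"
begin

definition expect_dens :: "'a measure \<Rightarrow> ('a \<Rightarrow> real) \<Rightarrow> ('a \<Rightarrow> real) \<Rightarrow> real" where
  "expect_dens M p g = (\<integral>x. g x * p x \<partial>M)"

definition is_density :: "'a measure \<Rightarrow> ('a \<Rightarrow> real) \<Rightarrow> bool" where
  "is_density M p \<longleftrightarrow> p \<in> borel_measurable M \<and> (\<forall>x\<in>space M. 0 \<le> p x)
      \<and> integrable M p \<and> (\<integral>x. p x \<partial>M) = 1"

definition ptilde_pos :: "real \<Rightarrow> ('a \<Rightarrow> real) \<Rightarrow> ('a \<Rightarrow> real) \<Rightarrow> 'a \<Rightarrow> real" where
  "ptilde_pos \<pi> pp pn x = (\<pi> * pp x + (1 - \<pi>)^2 * pn x) / ((1 - \<pi>)^2 + \<pi>)"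

definition ptilde_neg :: "real \<Rightarrow> ('a \<Rightarrow> real) \<Rightarrow> ('a \<Rightarrow> real) \<Rightarrow> 'a \<Rightarrow> real" where
  "ptilde_neg \<pi> pp pn x = (\<pi>^2 * pp x + (1 - \<pi>) * pn x) / (\<pi>^2 + (1 - \<pi>))"

definition risk :: "'a measure \<Rightarrow> real \<Rightarrow> ('a \<Rightarrow> real) \<Rightarrow> ('a \<Rightarrow> real)
    \<Rightarrow> (real \<Rightarrow> real \<Rightarrow> real) \<Rightarrow> ('a \<Rightarrow> real) \<Rightarrow> real" where
  "risk M \<pi> pp pn L f = \<pi> * expect_dens M pp (\<lambda>x. L (f x) 1)
      + (1 - \<pi>) * expect_dens M pn (\<lambda>x. L (f x) (-1))"

definition RPC_pos :: "'a measure \<Rightarrow> real \<Rightarrow> ('a \<Rightarrow> real) \<Rightarrow> ('a \<Rightarrow> real)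
    \<Rightarrow> (real \<Rightarrow> real \<Rightarrow> real) \<Rightarrow> ('a \<Rightarrow> real) \<Rightarrow> real" where
  "RPC_pos M \<pi> pp pn L f =
     expect_dens M (ptilde_pos \<pi> pp pn) (\<lambda>x. L (f x) 1 - \<pi> * L (f x) (-1))"

definition RPC_neg :: "'a measure \<Rightarrow> real \<Rightarrow> ('a \<Rightarrow> real) \<Rightarrow> ('a \<Rightarrow> real)
    \<Rightarrow> (real \<Rightarrow> real \<Rightarrow> real) \<Rightarrow> ('a \<Rightarrow> real) \<Rightarrow> real" where
  "RPC_neg M \<pi> pp pn L f =
     expect_dens M (ptilde_neg \<pi> pp pn) (\<lambda>x. L (f x) (-1) - (1 - \<pi>) * L (f x) 1)"

definition RPC_pos_hat :: "real \<Rightarrow> (real \<Rightarrow> real \<Rightarrow> real) \<Rightarrow> nat \<Rightarrow> (nat \<Rightarrow> 'a)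
    \<Rightarrow> ('a \<Rightarrow> real) \<Rightarrow> real" where
  "RPC_pos_hat \<pi> L n xs f = (1 / real n) * (\<Sum>i=1..n. L (f (xs i)) 1 - \<pi> * L (f (xs i)) (-1))"

definition RPC_neg_hat :: "real \<Rightarrow> (real \<Rightarrow> real \<Rightarrow> real) \<Rightarrow> nat \<Rightarrow> (nat \<Rightarrow> 'a)
    \<Rightarrow> ('a \<Rightarrow> real) \<Rightarrow> real" where
  "RPC_neg_hat \<pi> L n xs' f =
     (1 / real n) * (\<Sum>i=1..n. L (f (xs' i)) (-1) - (1 - \<pi>) * L (f (xs' i)) 1)"

definition is_argmin_on :: "('b \<Rightarrow> real) \<Rightarrow> 'b set \<Rightarrow> 'b \<Rightarrow> bool" where
  "is_argmin_on R F f \<longleftrightarrow> f \<in> F \<and> (\<forall>g\<in>F. R f \<le> R g)"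

end

theory Submission
  imports Defs
begin

lemma two_ereal: "(2::ereal) * x = x + x"
  using mult_2_ereal[of x] by simp

theorem lemma2:
  fixes M :: "'a measure" and \<pi> :: real and pp pn :: "'a \<Rightarrow> real"
    and L :: "real \<Rightarrow> real \<Rightarrow> real" and F :: "('a \<Rightarrow> real) set"
    and n :: nat and xs xs' :: "nat \<Rightarrow> 'a" and fhat fstar :: "'a \<Rightarrow> real"
  assumes "0 < \<pi>" "\<pi> < 1"
    and "is_density M pp" "is_density M pn"
    and "\<And>z y. 0 \<le> L z y"
    and "\<And>f y. f \<in> F \<Longrightarrow> y \<in> {1, -1} \<Longrightarrow> integrable M (\<lambda>x. L (f x) y * pp x)"
    and "\<And>f y. f \<in> F \<Longrightarrow> y \<in> {1, -1} \<Longrightarrow> integrable M (\<lambda>x. L (f x) y * pn x)"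
    and "0 < n"
    and "\<And>i. i \<in> {1..n} \<Longrightarrow> xs i \<in> space M"
    and "\<And>i. i \<in> {1..n} \<Longrightarrow> xs' i \<in> space M"
    and "is_argmin_on (\<lambda>f. RPC_pos_hat \<pi> L n xs f + RPC_neg_hat \<pi> L n xs' f) F fhat"
    and "is_argmin_on (risk M \<pi> pp pn L) F fstar"
  shows "ereal (risk M \<pi> pp pn L fhat - risk M \<pi> pp pn L fstar)
     \<le> 2 * (SUP f\<in>F. ereal \<bar>RPC_pos M \<pi> pp pn L f - RPC_pos_hat \<pi> L n xs f\<bar>)
       + 2 * (SUP f\<in>F. ereal \<bar>RPC_neg M \<pi> pp pn L f - RPC_neg_hat \<pi> L n xs' f\<bar>)"
proof -
  define a where "a = \<pi>"
  define b where "b = 1 - \<pi>"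
  define D where "D = 1 - a + a^2"
  have D: "D > 0" unfolding D_def a_def using assms(1,2)
    by (smt (verit) mult_pos_pos power2_eq_square)
  have Db1: "(1 - \<pi>)^2 + \<pi> = D" and Db2: "\<pi>^2 + (1 - \<pi>) = D"
    unfolding D_def a_def by (auto simp: power2_eq_square algebra_simps)
  have decomp: "risk M \<pi> pp pn L f = RPC_pos M \<pi> pp pn L f + RPC_neg M \<pi> pp pn L f"
    if f: "f \<in> F" for f
  proof -
    define A where "A = (\<integral>x. L (f x) 1 * pp x \<partial>M)"
    define B where "B = (\<integral>x. L (f x) (-1) * pp x \<partial>M)"
    define C where "C = (\<integral>x. L (f x) 1 * pn x \<partial>M)"
    define E where "E = (\<integral>x. L (f x) (-1) * pn x \<partial>M)"
    have i1: "integrable M (\<lambda>x. L (f x) 1 * pp x)" using assms(6)[OF f] by simp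
    have i2: "integrable M (\<lambda>x. L (f x) (-1) * pp x)" using assms(6)[OF f] by simp
    have i3: "integrable M (\<lambda>x. L (f x) 1 * pn x)" using assms(7)[OF f] by simp
    have i4: "integrable M (\<lambda>x. L (f x) (-1) * pn x)" using assms(7)[OF f] by simp
    have p: "RPC_pos M \<pi> pp pn L f = (\<pi>/D) * A + (b^2/D) * C - (\<pi>^2/D) * B - (\<pi>*b^2/D) * E"
    proof -
      have "RPC_pos M \<pi> pp pn L f = (\<integral>x. (\<pi>/D) * (L (f x) 1 * pp x) + (b^2/D) * (L (f x) 1 * pn x)
          - (\<pi>^2/D) * (L (f x) (-1) * pp x) - (\<pi>*b^2/D) * (L (f x) (-1) * pn x) \<partial>M)"
        unfolding RPC_pos_def expect_dens_def ptilde_pos_def Db1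
        using D by (intro Bochner_Integration.integral_cong) (auto simp: b_def field_simps power2_eq_square)
      also have "\<dots> = (\<pi>/D) * A + (b^2/D) * C - (\<pi>^2/D) * B - (\<pi>*b^2/D) * E"
        unfolding A_def B_def C_def E_def using i1 i2 i3 i4 by simp
      finally show ?thesis .
    qed
    have q: "RPC_neg M \<pi> pp pn L f = (\<pi>^2/D) * B + (b/D) * E - (\<pi>^2*b/D) * A - (b^2/D) * C"
    proof -
      have "RPC_neg M \<pi> pp pn L f = (\<integral>x. (\<pi>^2/D) * (L (f x) (-1) * pp x) + (b/D) * (L (f x) (-1) * pn x)
          - (\<pi>^2*b/D) * (L (f x) 1 * pp x) - (b^2/D) * (L (f x) 1 * pn x) \<partial>M)"
        unfolding RPC_neg_def expect_dens_def ptilde_neg_def Db2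
        using D by (intro Bochner_Integration.integral_cong) (auto simp: b_def field_simps power2_eq_square)
      also have "\<dots> = (\<pi>^2/D) * B + (b/D) * E - (\<pi>^2*b/D) * A - (b^2/D) * C"
        unfolding A_def B_def C_def E_def using i1 i2 i3 i4 by simp
      finally show ?thesis .
    qed
    have r: "risk M \<pi> pp pn L f = \<pi> * A + b * E"
      unfolding risk_def expect_dens_def A_def E_def b_def by simp
    have "\<pi> * A + b * E = ((\<pi>/D) * A + (b^2/D) * C - (\<pi>^2/D) * B - (\<pi>*b^2/D) * E)
        + ((\<pi>^2/D) * B + (b/D) * E - (\<pi>^2*b/D) * A - (b^2/D) * C)"
    proof -
      have Dn: "D \<noteq> 0" using D by simp
      have e1: "\<pi> - \<pi>^2*b = \<pi> * D" and e2: "b - \<pi>*b^2 = b * D"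
        unfolding D_def a_def b_def by (simp_all add: power2_eq_square algebra_simps)
      have "((\<pi>/D) * A + (b^2/D) * C - (\<pi>^2/D) * B - (\<pi>*b^2/D) * E)
        + ((\<pi>^2/D) * B + (b/D) * E - (\<pi>^2*b/D) * A - (b^2/D) * C)
         = ((\<pi> - \<pi>^2*b)/D) * A + ((b - \<pi>*b^2)/D) * E"
        by (simp add: diff_divide_distrib algebra_simps)
      also have "\<dots> = \<pi> * A + b * E" unfolding e1 e2 using Dn by simp
      finally show ?thesis by simp
    qed
    then show ?thesis using p q r by simp
  qed
  have fh: "fhat \<in> F" and fs: "fstar \<in> F"
    using assms(11,12) unfolding is_argmin_on_def by auto
  have hmin: "RPC_pos_hat \<pi> L n xs fhat + RPC_neg_hat \<pi> L n xs' fhat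
      \<le> RPC_pos_hat \<pi> L n xs fstar + RPC_neg_hat \<pi> L n xs' fstar"
    using assms(11) fs unfolding is_argmin_on_def by auto
  define S1 where "S1 = (SUP f\<in>F. ereal \<bar>RPC_pos M \<pi> pp pn L f - RPC_pos_hat \<pi> L n xs f\<bar>)"
  define S2 where "S2 = (SUP f\<in>F. ereal \<bar>RPC_neg M \<pi> pp pn L f - RPC_neg_hat \<pi> L n xs' f\<bar>)"
  define u1 where "u1 = \<bar>RPC_pos M \<pi> pp pn L fhat - RPC_pos_hat \<pi> L n xs fhat\<bar>"
  define u2 where "u2 = \<bar>RPC_pos M \<pi> pp pn L fstar - RPC_pos_hat \<pi> L n xs fstar\<bar>"
  define v1 where "v1 = \<bar>RPC_neg M \<pi> pp pn L fhat - RPC_neg_hat \<pi> L n xs' fhat\<bar>"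
  define v2 where "v2 = \<bar>RPC_neg M \<pi> pp pn L fstar - RPC_neg_hat \<pi> L n xs' fstar\<bar>"
  have "risk M \<pi> pp pn L fhat - risk M \<pi> pp pn L fstar \<le> (u1 + u2) + (v1 + v2)"
    using decomp[OF fh] decomp[OF fs] hmin unfolding u1_def u2_def v1_def v2_def by linarith
  hence "ereal (risk M \<pi> pp pn L fhat - risk M \<pi> pp pn L fstar) \<le> (ereal u1 + ereal u2) + (ereal v1 + ereal v2)"
    by simp
  also have "\<dots> \<le> (S1 + S1) + (S2 + S2)"
  proof (intro add_mono)
    show "ereal u1 \<le> S1" unfolding u1_def S1_def using fh by (rule SUP_upper)
    show "ereal u2 \<le> S1" unfolding u2_def S1_def using fs by (rule SUP_upper)
    show "ereal v1 \<le> S2" unfolding v1_def S2_def using fh by (rule SUP_upper)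
    show "ereal v2 \<le> S2" unfolding v2_def S2_def using fs by (rule SUP_upper)
  qed
  finally show ?thesis unfolding S1_def S2_def two_ereal .
qed

end
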